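(* Let $P_n$ be a random school choice problem of size $n$ and let $NE_n$ be the set of students $j$ that no student envies under $\mathrm{DA}(P_n)$ (i.e. $j$ has in-degree $0$ in $G^{\mathrm{DA}(P_n)}$). Then $\mathbb E[|NE_n|]=H_n:=\sum_{k=1}^n \frac1k$.
   Context: A random school choice problem $P_n$ of size $n$ has a set $I$ of $n$ students and a set $S$ of $n$ schools, each school with quota 1; each student's strict preference over $S$ is uniform among all $n!$ linear orders, each school's strict priority over $I$ is uniform among all $n!$ linear orders, and all of these are mutually independent. $\mathrm{DA}(P_n)$ is the matching produced by student-proposing deferred acceptance (each unheld student applies to her most preferred school not yet rejecting her; each school tentatively holds its highest-priority applicant and rejects the others; stop when no new rejection occurs); here every student is matched. Student $i$ envies student $j$ if $i$ strictly prefers $\mathrm{DA}_j(P_n)$ to $\mathrm{DA}_i(P_n)$; the envy digraph $G^{\mathrm{DA}(P_n)}$ has vertex set $I$ and an edge $(i,j)$ iff $i$ envies $j$. *)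

theory Defs
  imports "HOL-Probability.Probability" "HOL-Combinatorics.Multiset_Permutations"
begin

text \<open>Students and schools are both {0..<n}. A preference of student i is a list
  of all schools, most preferred first; a priority of school s is a list of all
  students, highest priority first.\<close>

definition ranks_above :: "'a list \<Rightarrow> 'a \<Rightarrow> 'a \<Rightarrow> bool" where
  "ranks_above xs a b \<longleftrightarrow> (\<exists>k l. k < l \<and> l < length xs \<and> xs ! k = a \<and> xs ! l = b)"

type_synonym profile = "(nat \<Rightarrow> nat list) \<times> (nat \<Rightarrow> nat list)"

definition profiles :: "nat \<Rightarrow> profile set" where
  "profiles n = (\<Pi>\<^sub>E i\<in>{0..<n}. permutations_of_set {0..<n})
              \<times> (\<Pi>\<^sub>E s\<in>{0..<n}. permutations_of_set {0..<n})"

text \<open>The state r i is the number of schools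
  that have rejected student i so far; every student applies to pref i ! r i
  (held students re-apply to the school holding them).\<close>

definition da_step :: "nat \<Rightarrow> profile \<Rightarrow> (nat \<Rightarrow> nat) \<Rightarrow> (nat \<Rightarrow> nat)" where
  "da_step n P r = (\<lambda>i. if (\<exists>j<n. j \<noteq> i \<and> fst P j ! r j = fst P i ! r i
                              \<and> ranks_above (snd P (fst P i ! r i)) j i)
                        then Suc (r i) else r i)"

text \<open>The algorithm stops after at most n*(n-1) rounds with a rejection; after
  that the step is the identity, so iterating n*n times yields the final state.\<close>

definition da_final :: "nat \<Rightarrow> profile \<Rightarrow> (nat \<Rightarrow> nat)" where
  "da_final n P = (da_step n P ^^ (n * n)) (\<lambda>_. 0)"

definition DA :: "nat \<Rightarrow> profile \<Rightarrow> nat \<Rightarrow> nat" where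
  "DA n P i = fst P i ! da_final n P i"

definition envies :: "nat \<Rightarrow> profile \<Rightarrow> nat \<Rightarrow> nat \<Rightarrow> bool" where
  "envies n P i j \<longleftrightarrow> ranks_above (fst P i) (DA n P j) (DA n P i)"

definition not_envied :: "nat \<Rightarrow> profile \<Rightarrow> nat set" where
  "not_envied n P = {j\<in>{0..<n}. \<not> (\<exists>i\<in>{0..<n}. envies n P i j)}"

end

theory Submission
  imports Defs
begin

lemma ranks_above_distinct_nth:
  assumes "distinct xs" "r < length xs"
  shows "ranks_above xs a (xs ! r) \<longleftrightarrow> a \<in> set (take r xs)"
proof
  assume "ranks_above xs a (xs ! r)"
  then obtain k l where kl: "k < l" "l < length xs" "xs ! k = a" "xs ! l = xs ! r"
    unfolding ranks_above_def by blast
  then have "l = r" using assms nth_eq_iff_index_eq by blast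
  then show "a \<in> set (take r xs)" using kl by (auto simp: in_set_conv_nth)
next
  assume "a \<in> set (take r xs)"
  then obtain k where "k < r" "xs ! k = a" using assms
    by (auto simp: in_set_conv_nth)
  then show "ranks_above xs a (xs ! r)" unfolding ranks_above_def using assms by blast
qed

lemma ranks_above_total:
  assumes "a \<in> set xs" "b \<in> set xs" "a \<noteq> b"
  shows "ranks_above xs a b \<or> ranks_above xs b a"
proof -
  obtain k where k: "k < length xs" "xs ! k = a" using assms by (auto simp: in_set_conv_nth)
  obtain l where l: "l < length xs" "xs ! l = b" using assms by (auto simp: in_set_conv_nth)
  have "k \<noteq> l" using k l assms by auto
  then show ?thesis unfolding ranks_above_def using k l
    by (metis linorder_neqE_nat)
qed

lemma ranks_above_top:
  assumes "distinct xs" "J \<subseteq> set xs" "J \<noteq> {}"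
  shows "\<exists>j\<in>J. \<forall>j'\<in>J. \<not> ranks_above xs j' j"
proof -
  define K where "K = {k. k < length xs \<and> xs ! k \<in> J}"
  have "K \<noteq> {}" using assms by (force simp: K_def in_set_conv_nth)
  moreover have "finite K" by (simp add: K_def)
  ultimately have k0: "Min K \<in> K" by simp
  show ?thesis
  proof (intro bexI ballI)
    show "xs ! Min K \<in> J" using k0 by (simp add: K_def)
    fix j' assume "j' \<in> J"
    show "\<not> ranks_above xs j' (xs ! Min K)"
    proof
      assume "ranks_above xs j' (xs ! Min K)"
      then obtain k l where kl: "k < l" "l < length xs" "xs ! k = j'" "xs ! l = xs ! Min K"
        unfolding ranks_above_def by blast
      have "l = Min K" using kl k0 assms(1) nth_eq_iff_index_eq by (auto simp: K_def)
      moreover have "k \<in> K" using kl \<open>j' \<in> J\<close> by (auto simp: K_def)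
      ultimately show False using kl \<open>finite K\<close> Min_le by (metis leD)
    qed
  qed
qed

definition Cset :: "nat \<Rightarrow> (nat \<Rightarrow> nat list) \<Rightarrow> (nat \<Rightarrow> nat list) set" where
  "Cset n p = (\<Pi>\<^sub>E i\<in>{0..<n}. {l \<in> permutations_of_set {0..<n}. take (length (p i)) l = p i})"

lemma card_prefix_perms:
  assumes "distinct p" "set p \<subseteq> S" "finite S"
  shows "card {l \<in> permutations_of_set S. take (length p) l = p} = fact (card S - length p)"
proof -
  have "bij_betw (\<lambda>l'. p @ l') (permutations_of_set (S - set p))
          {l \<in> permutations_of_set S. take (length p) l = p}"
  proof (rule bij_betw_imageI)
    show "inj_on ((@) p) (permutations_of_set (S - set p))" by (simp add: inj_on_def)
    show "(@) p ` permutations_of_set (S - set p) = {l \<in> permutations_of_set S. take (length p) l = p}"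
    proof
      show "(@) p ` permutations_of_set (S - set p) \<subseteq> {l \<in> permutations_of_set S. take (length p) l = p}"
        using assms by (auto simp: permutations_of_set_def)
      show "{l \<in> permutations_of_set S. take (length p) l = p} \<subseteq> (@) p ` permutations_of_set (S - set p)"
      proof
        fix l assume l: "l \<in> {l \<in> permutations_of_set S. take (length p) l = p}"
        then have eq: "l = p @ drop (length p) l" by (metis (mono_tags) append_take_drop_id mem_Collect_eq)
        have "distinct l" "set l = S" using l by (auto simp: permutations_of_set_def)
        then have "distinct (drop (length p) l)" "set (drop (length p) l) = S - set p"
          using eq by (metis distinct_append) (metis Diff_cancel Un_Diff \<open>distinct l\<close> \<open>set l = S\<close> distinct_append eq set_append sup_bot.right_neutral disjoint_iff Diff_triv inf_commute Int_commute Un_commute Diff_Un)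
        then show "l \<in> (@) p ` permutations_of_set (S - set p)"
          using eq by (auto simp: permutations_of_set_def intro!: image_eqI[of _ _ "drop (length p) l"])
      qed
    qed
  qed
  then have "card {l \<in> permutations_of_set S. take (length p) l = p} = fact (card (S - set p))"
    using assms by (simp add: bij_betw_same_card[symmetric])
  also have "card (S - set p) = card S - length p"
    using assms by (simp add: card_Diff_subset distinct_card)
  finally show ?thesis .
qed


definition valid0 :: "nat \<Rightarrow> (nat \<Rightarrow> nat list) \<Rightarrow> bool" where
  "valid0 n p \<longleftrightarrow> (\<forall>i<n. distinct (p i) \<and> set (p i) \<subseteq> {0..<n})"

lemma card_Cset:
  assumes "valid0 n p"
  shows "card (Cset n p) = (\<Prod>i\<in>{0..<n}. fact (n - length (p i)))"
  unfolding Cset_def using assms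
  by (subst card_PiE) (auto simp: valid0_def card_prefix_perms intro!: prod.cong)

lemma finite_Cset: "finite (Cset n p)"
  unfolding Cset_def by (intro finite_PiE) auto

lemma Cset_iff:
  "prefs \<in> Cset n p \<longleftrightarrow> prefs \<in> extensional {0..<n} \<and>
     (\<forall>i<n. prefs i \<in> permutations_of_set {0..<n} \<and> take (length (p i)) (prefs i) = p i)"
  unfolding Cset_def PiE_def Pi_def by auto

lemma Cset_mono_app:
  assumes "prefs \<in> Cset n (p(i := p i @ [x]))" "i < n"
  shows "prefs \<in> Cset n p"
proof -
  have "take (length (p i)) (prefs i) = p i"
  proof -
    have "take (length ((p(i := p i @ [x])) i)) (prefs i) = (p(i := p i @ [x])) i"
      using assms by (simp only: Cset_iff)
    then have "take (Suc (length (p i))) (prefs i) = p i @ [x]" by simp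
    then have "take (length (p i)) (take (Suc (length (p i))) (prefs i)) = p i" by simp
    then show ?thesis by simp
  qed
  then show ?thesis using assms unfolding Cset_iff by (metis fun_upd_other)
qed

lemma Cset_split:
  assumes "valid0 n p" "i < n" "length (p i) < n"
  shows "Cset n p = (\<Union>x\<in>{0..<n} - set (p i). Cset n (p(i := p i @ [x])))"
proof
  show "(\<Union>x\<in>{0..<n} - set (p i). Cset n (p(i := p i @ [x]))) \<subseteq> Cset n p"
    using Cset_mono_app assms by blast
  show "Cset n p \<subseteq> (\<Union>x\<in>{0..<n} - set (p i). Cset n (p(i := p i @ [x])))"
  proof
    fix prefs assume pr: "prefs \<in> Cset n p"
    define x where "x = prefs i ! length (p i)"
    have pi: "prefs i \<in> permutations_of_set {0..<n}" "take (length (p i)) (prefs i) = p i"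
      using pr assms by (auto simp: Cset_def)
    have len: "length (prefs i) = n" using pi by (simp add: length_finite_permutations_of_set)
    have tk: "take (Suc (length (p i))) (prefs i) = p i @ [x]"
      using pi len assms by (simp add: x_def take_Suc_conv_app_nth)
    have "distinct (prefs i)" "set (prefs i) = {0..<n}" using pi by (auto simp: permutations_of_set_def)
    have "set (take (Suc (length (p i))) (prefs i)) \<subseteq> {0..<n}"
      using \<open>set (prefs i) = {0..<n}\<close> by (metis set_take_subset)
    moreover have "distinct (take (Suc (length (p i))) (prefs i))"
      using \<open>distinct (prefs i)\<close> by simp
    ultimately have "distinct (p i @ [x])" "set (p i @ [x]) \<subseteq> {0..<n}"
      unfolding tk by auto
    then have xin: "x \<in> {0..<n} - set (p i)" by auto
    have "prefs \<in> Cset n (p(i := p i @ [x]))"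
      using pr tk unfolding Cset_def by (auto simp: PiE_def Pi_def)
    then show "prefs \<in> (\<Union>x\<in>{0..<n} - set (p i). Cset n (p(i := p i @ [x])))" using xin by blast
  qed
qed

lemma sum_Cset_split:
  assumes "valid0 n p" "i < n" "length (p i) < n"
  shows "sum F (Cset n p) = (\<Sum>x\<in>{0..<n} - set (p i). sum F (Cset n (p(i := p i @ [x]))))"
proof -
  have "sum F (Cset n p) = sum F (\<Union>x\<in>{0..<n} - set (p i). Cset n (p(i := p i @ [x])))"
    using Cset_split[OF assms] by simp
  also have "\<dots> = (\<Sum>x\<in>{0..<n} - set (p i). sum F (Cset n (p(i := p i @ [x]))))"
  proof (rule sum.UNION_disjoint)
    show "\<forall>x::nat\<in>{0..<n} - set (p i). \<forall>y\<in>{0..<n} - set (p i). x \<noteq> y \<longrightarrow>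
        Cset n (p(i := p i @ [x])) \<inter> Cset n (p(i := p i @ [y])) = {}"
    proof (intro ballI impI)
      fix x y :: nat assume "x \<noteq> y"
      show "Cset n (p(i := p i @ [x])) \<inter> Cset n (p(i := p i @ [y])) = {}"
      proof (rule ccontr)
        assume "Cset n (p(i := p i @ [x])) \<inter> Cset n (p(i := p i @ [y])) \<noteq> {}"
        then obtain f where "f \<in> Cset n (p(i := p i @ [x]))" "f \<in> Cset n (p(i := p i @ [y]))" by blast
        then have "take (length ((p(i := p i @ [x])) i)) (f i) = (p(i := p i @ [x])) i"
            "take (length ((p(i := p i @ [y])) i)) (f i) = (p(i := p i @ [y])) i"
          using assms(2) by (simp_all only: Cset_iff)
        then have "take (Suc (length (p i))) (f i) = p i @ [x]" "take (Suc (length (p i))) (f i) = p i @ [y]"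
          by simp_all
        then show False using \<open>x \<noteq> y\<close> by simp
      qed
    qed
  qed (auto simp: finite_Cset)
  finally show ?thesis .
qed

lemma card_Cset_app:
  assumes "valid0 n p" "i < n" "length (p i) < n" "x < n" "x \<notin> set (p i)"
  shows "real (card (Cset n p)) = real (n - length (p i)) * real (card (Cset n (p(i := p i @ [x]))))"
proof -
  have v: "valid0 n (p(i := p i @ [x]))" using assms by (auto simp: valid0_def)
  have "card (Cset n p) = fact (n - length (p i)) * (\<Prod>j\<in>{0..<n} - {i}. fact (n - length (p j)))"
    using assms by (simp add: card_Cset prod.remove)
  moreover have "card (Cset n (p(i := p i @ [x]))) = fact (n - Suc (length (p i))) * (\<Prod>j\<in>{0..<n} - {i}. fact (n - length (p j)))"
    using assms v by (simp add: card_Cset prod.remove)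
  moreover have "fact (n - length (p i)) = (n - length (p i)) * (fact (n - Suc (length (p i))) :: nat)"
  proof -
    have "n - length (p i) = Suc (n - Suc (length (p i)))" using assms by simp
    then show ?thesis by (simp only: fact_Suc of_nat_id)
  qed
  ultimately have "card (Cset n p) = (n - length (p i)) * card (Cset n (p(i := p i @ [x])))"
    by (simp only: mult.assoc)
  then show ?thesis by (metis of_nat_mult)
qed

definition ext :: "nat set \<Rightarrow> (nat \<Rightarrow> nat list) \<Rightarrow> (nat \<Rightarrow> nat list) \<Rightarrow> (nat \<Rightarrow> nat list)" where
  "ext R p prefs = (\<lambda>i. if i \<in> R then take (Suc (length (p i))) (prefs i) else p i)"

lemma tower:
  fixes G :: "(nat \<Rightarrow> nat list) \<Rightarrow> real" and H :: "(nat \<Rightarrow> nat list) \<Rightarrow> real"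
  assumes "finite R" "R \<subseteq> {0..<n}" "valid0 n p" "\<forall>i\<in>R. length (p i) < n"
    "\<forall>prefs\<in>Cset n p. sum G (Cset n (ext R p prefs)) = real (card (Cset n (ext R p prefs))) * H (ext R p prefs)"
  shows "sum G (Cset n p) = (\<Sum>prefs\<in>Cset n p. H (ext R p prefs))"
  using assms
proof (induction R arbitrary: p rule: finite_induct)
  case empty
  have e: "ext {} p prefs = p" for prefs by (simp add: ext_def)
  show ?case
  proof (cases "Cset n p = {}")
    case False
    then show ?thesis using empty by (auto simp: e)
  qed simp
next
  case (insert i R0)
  have i: "i < n" "length (p i) < n" using insert by auto
  have "sum G (Cset n p) = (\<Sum>x\<in>{0..<n} - set (p i). sum G (Cset n (p(i := p i @ [x]))))"
    using sum_Cset_split[OF insert(5) i] .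
  also have "\<dots> = (\<Sum>x\<in>{0..<n} - set (p i). \<Sum>prefs\<in>Cset n (p(i := p i @ [x])). H (ext (insert i R0) p prefs))"
  proof (rule sum.cong[OF refl])
    fix x assume x: "x \<in> {0..<n} - set (p i)"
    let ?p = "p(i := p i @ [x])"
    have eq: "ext R0 ?p prefs = ext (insert i R0) p prefs" if "prefs \<in> Cset n ?p" for prefs
    proof -
      have "take (length (?p i)) (prefs i) = ?p i" using that i by (simp only: Cset_iff)
      then have "take (Suc (length (p i))) (prefs i) = p i @ [x]" by simp
      then show ?thesis using insert(2) by (auto simp: ext_def fun_eq_iff)
    qed
    have "sum G (Cset n ?p) = (\<Sum>prefs\<in>Cset n ?p. H (ext R0 ?p prefs))"
    proof (rule insert.IH)
      show "R0 \<subseteq> {0..<n}" using insert by auto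
      show "valid0 n ?p" using insert(5) x by (auto simp: valid0_def)
      show "\<forall>j\<in>R0. length (?p j) < n" using insert by auto
      show "\<forall>prefs\<in>Cset n ?p. sum G (Cset n (ext R0 ?p prefs)) = real (card (Cset n (ext R0 ?p prefs))) * H (ext R0 ?p prefs)"
        using insert(7) eq Cset_mono_app[OF _ i(1)] by auto
    qed
    then show "sum G (Cset n ?p) = (\<Sum>prefs\<in>Cset n ?p. H (ext (insert i R0) p prefs))"
      using eq by simp
  qed
  also have "\<dots> = (\<Sum>prefs\<in>Cset n p. H (ext (insert i R0) p prefs))"
    using sum_Cset_split[OF insert(5) i, symmetric] .
  finally show ?case .
qed


definition harm :: "nat \<Rightarrow> real" where "harm e = (\<Sum>k=1..e. 1 / real k)"
definition empties :: "nat \<Rightarrow> (nat \<Rightarrow> nat list) \<Rightarrow> nat set" where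
  "empties n p = {x\<in>{0..<n}. \<forall>j<n. x \<notin> set (p j)}"
definition cnt :: "nat \<Rightarrow> (nat \<Rightarrow> nat list) \<Rightarrow> nat \<Rightarrow> nat" where
  "cnt n p s = card {j\<in>{0..<n}. s \<in> set (p j)}"
definition Phi :: "nat \<Rightarrow> nat \<Rightarrow> (nat \<Rightarrow> nat list) \<Rightarrow> real" where
  "Phi n s p = (if cnt n p s = 0 then harm (card (empties n p)) / real (card (empties n p))
     else if cnt n p s = 1 then 1 / (real (card (empties n p)) + 1) else 0)"

lemma harm_Suc: "harm (Suc e) = harm e + 1 / real (Suc e)"
  by (simp add: harm_def)

lemma empties_app:
  assumes "i < n" "x < n"
  shows "empties n (p(i := p i @ [x])) = empties n p - {x}"
  using assms by (auto simp: empties_def)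

lemma cnt_app_ge: "i < n \<Longrightarrow> cnt n p s \<le> cnt n (p(i := p i @ [x])) s"
  unfolding cnt_def by (rule card_mono) (auto)

lemma cnt_app_other: "i < n \<Longrightarrow> x \<noteq> s \<Longrightarrow> cnt n (p(i := p i @ [x])) s = cnt n p s"
  unfolding cnt_def by (rule arg_cong[where f=card]) auto

lemma cnt_app_same: "i < n \<Longrightarrow> s \<notin> set (p i) \<Longrightarrow> cnt n (p(i := p i @ [s])) s = Suc (cnt n p s)"
proof -
  assume a: "i < n" "s \<notin> set (p i)"
  have "{j\<in>{0..<n}. s \<in> set ((p(i := p i @ [s])) j)} = insert i {j\<in>{0..<n}. s \<in> set (p j)}"
    using a by auto
  moreover have "i \<notin> {j\<in>{0..<n}. s \<in> set (p j)}" using a by auto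
  ultimately show ?thesis unfolding cnt_def by simp
qed

lemma cnt_zero_iff: "s < n \<Longrightarrow> cnt n p s = 0 \<longleftrightarrow> s \<in> empties n p"
  unfolding cnt_def empties_def by auto

lemma reveal_Phi:
  assumes v: "valid0 n p" and i: "i < n" and s: "s < n"
    and sc: "cnt n p s \<le> 1 \<longrightarrow> s \<notin> set (p i)" and e1: "card (empties n p) \<ge> 1"
  shows "(\<Sum>x\<in>{0..<n} - set (p i). Phi n s (p(i := p i @ [x]))) = real (n - length (p i)) * Phi n s p"
proof -
  define D where "D = {0..<n} - set (p i)"
  define E where "E = empties n p"
  define e where "e = card E"
  have fE: "finite E" by (simp add: E_def empties_def)
  have fD: "finite D" by (simp add: D_def)
  have ED: "E \<subseteq> D" using i by (auto simp: E_def D_def empties_def)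
  have cD: "card D = n - length (p i)"
    using v i by (simp add: D_def valid0_def card_Diff_subset distinct_card)
  have e1': "e \<ge> 1" using e1 by (simp add: e_def E_def)
  have emp': "empties n (p(i := p i @ [x])) = E - {x}" if "x \<in> D" for x
    using empties_app[OF i] that by (simp add: D_def E_def)
  have cardE': "card (E - {x}) = e - 1" if "x \<in> E" for x
    using that fE by (simp add: e_def)
  have cardE'': "card (E - {x}) = e" if "x \<notin> E" for x
    using that by (simp add: e_def)
  consider "cnt n p s \<ge> 2" | "cnt n p s = 1" | "cnt n p s = 0" by linarith
  then show ?thesis
  proof cases
    case 1
    have "Phi n s (p(i := p i @ [x])) = 0" for x
      using cnt_app_ge[OF i, of p s x] 1 by (simp add: Phi_def)
    moreover have "Phi n s p = 0" using 1 by (simp add: Phi_def)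
    ultimately show ?thesis by simp
  next
    case 2
    note c1 = this
    have sni: "s \<notin> set (p i)" using sc 2 by simp
    have sE: "s \<notin> E" using cnt_zero_iff[OF s, of p] 2 by (simp add: E_def)
    have sD: "s \<in> D" using s sni by (simp add: D_def)
    have val: "Phi n s (p(i := p i @ [x])) =
        (if x = s then 0 else if x \<in> E then 1 / real e else 1 / (real e + 1))" if "x \<in> D" for x
    proof -
      consider "x = s" | "x \<noteq> s" "x \<in> E" | "x \<noteq> s" "x \<notin> E" by blast
      then show ?thesis
      proof cases
        case 1 then show ?thesis using cnt_app_same[where p=p, OF i sni] c1 by (simp add: Phi_def)
      next
        case 2
        then show ?thesis using cnt_app_other[where p=p, OF i 2(1)] c1 emp'[OF that] cardE'[OF 2(2)] e1'
          by (simp add: Phi_def of_nat_diff)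
      next
        case 3
        then show ?thesis using cnt_app_other[where p=p, OF i 3(1)] c1 emp'[OF that] cardE''[OF 3(2)]
          by (simp add: Phi_def)
      qed
    qed
    have "(\<Sum>x\<in>D. Phi n s (p(i := p i @ [x]))) =
          (\<Sum>x\<in>D. (if x = s then 0 else if x \<in> E then 1 / real e else 1 / (real e + 1)))"
      using val by (rule sum.cong[OF refl])
    also have "\<dots> = (\<Sum>x\<in>E. 1 / real e) + (\<Sum>x\<in>D - E - {s}. 1 / (real e + 1))"
    proof -
      have "D = E \<union> (D - E - {s}) \<union> {s}" using ED sD by auto
      then have "(\<Sum>x\<in>D. (if x = s then 0 else if x \<in> E then 1 / real e else 1 / (real e + 1)))
         = (\<Sum>x\<in>E \<union> (D - E - {s}) \<union> {s}. (if x = s then 0 else if x \<in> E then 1 / real e else 1 / (real e + 1)))"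
        by simp
      also have "\<dots> = (\<Sum>x\<in>E. (if x = s then 0 else if x \<in> E then 1 / real e else 1 / (real e + 1)))
          + (\<Sum>x\<in>D - E - {s}. (if x = s then 0 else if x \<in> E then 1 / real e else 1 / (real e + 1)))
          + (\<Sum>x\<in>{s}. (if x = s then 0 else if x \<in> E then 1 / real e else 1 / (real e + 1)))"
        using fE fD sE by (subst sum.union_disjoint; auto)+
      also have "\<dots> = (\<Sum>x\<in>E. 1 / real e) + (\<Sum>x\<in>D - E - {s}. 1 / (real e + 1))"
      proof -
        have "(\<Sum>x\<in>E. (if x = s then 0 else if x \<in> E then 1 / real e else 1 / (real e + 1))) = (\<Sum>x\<in>E. 1 / real e)"
          using sE by (intro sum.cong) auto
        moreover have "(\<Sum>x\<in>D - E - {s}. (if x = s then 0 else if x \<in> E then 1 / real e else 1 / (real e + 1))) = (\<Sum>x\<in>D - E - {s}. 1 / (real e + 1))"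
          by (intro sum.cong) auto
        ultimately show ?thesis by simp
      qed
      finally show ?thesis .
    qed
    also have "\<dots> = 1 + real (card D - e - 1) / (real e + 1)"
    proof -
      have "D - E - {s} = D - insert s E" by auto
      then have "card (D - E - {s}) = card D - card (insert s E)"
        using ED sD fD by (simp add: card_Diff_subset finite_subset)
      then have "card (D - E - {s}) = card D - e - 1" using sE fE by (simp add: e_def)
      then show ?thesis using e1' fD by (simp add: e_def)
    qed
    also have "\<dots> = real (card D) / (real e + 1)"
    proof -
      have "card D \<ge> e + 1"
      proof -
        have "card (insert s E) \<le> card D" using ED sD fD by (intro card_mono) auto
        then show ?thesis using sE fE by (simp add: e_def)
      qed
      then show ?thesis by (simp add: field_simps of_nat_diff)
    qed
    finally show ?thesis using cD 2 by (simp add: D_def Phi_def E_def e_def)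
  next
    case 3
    note c0 = this
    have sE: "s \<in> E" using cnt_zero_iff[OF s, of p] 3 by (simp add: E_def)
    have sni: "s \<notin> set (p i)" using sE i by (auto simp: E_def empties_def)
    have val: "Phi n s (p(i := p i @ [x])) =
        (if x = s then 1 / real e else if x \<in> E then harm (e - 1) / real (e - 1) else harm e / real e)" if "x \<in> D" for x
    proof -
      consider "x = s" | "x \<noteq> s" "x \<in> E" | "x \<noteq> s" "x \<notin> E" by blast
      then show ?thesis
      proof cases
        case 1 then show ?thesis using cnt_app_same[where p=p, OF i sni] c0 emp'[OF that] cardE'[OF sE] e1'
          by (simp add: Phi_def of_nat_diff)
      next
        case 2
        then show ?thesis using cnt_app_other[where p=p, OF i 2(1)] c0 emp'[OF that] cardE'[OF 2(2)]
          by (simp add: Phi_def)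
      next
        case 3
        then show ?thesis using cnt_app_other[where p=p, OF i 3(1)] c0 emp'[OF that] cardE''[OF 3(2)]
          by (simp add: Phi_def)
      qed
    qed
    have "(\<Sum>x\<in>D. Phi n s (p(i := p i @ [x]))) =
          (\<Sum>x\<in>D. (if x = s then 1 / real e else if x \<in> E then harm (e - 1) / real (e - 1) else harm e / real e))"
      using val by (rule sum.cong[OF refl])
    also have "\<dots> = (\<Sum>x\<in>E - {s}. harm (e - 1) / real (e - 1)) + (\<Sum>x\<in>D - E. harm e / real e) + 1 / real e"
    proof -
      have "D = (E - {s}) \<union> (D - E) \<union> {s}" using ED sE by auto
      then have "(\<Sum>x\<in>D. (if x = s then 1 / real e else if x \<in> E then harm (e - 1) / real (e - 1) else harm e / real e))
         = (\<Sum>x\<in>(E - {s}) \<union> (D - E) \<union> {s}. (if x = s then 1 / real e else if x \<in> E then harm (e - 1) / real (e - 1) else harm e / real e))"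
        by simp
      also have "\<dots> = (\<Sum>x\<in>E - {s}. (if x = s then 1 / real e else if x \<in> E then harm (e - 1) / real (e - 1) else harm e / real e))
          + (\<Sum>x\<in>D - E. (if x = s then 1 / real e else if x \<in> E then harm (e - 1) / real (e - 1) else harm e / real e))
          + (\<Sum>x\<in>{s}. (if x = s then 1 / real e else if x \<in> E then harm (e - 1) / real (e - 1) else harm e / real e))"
        using fE fD sE by (subst sum.union_disjoint; auto)+
      also have "\<dots> = (\<Sum>x\<in>E - {s}. harm (e - 1) / real (e - 1)) + (\<Sum>x\<in>D - E. harm e / real e) + 1 / real e"
      proof -
        have "(\<Sum>x\<in>E - {s}. (if x = s then 1 / real e else if x \<in> E then harm (e - 1) / real (e - 1) else harm e / real e)) = (\<Sum>x\<in>E - {s}. harm (e - 1) / real (e - 1))"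
          by (intro sum.cong) auto
        moreover have "(\<Sum>x\<in>D - E. (if x = s then 1 / real e else if x \<in> E then harm (e - 1) / real (e - 1) else harm e / real e)) = (\<Sum>x\<in>D - E. harm e / real e)"
          using sE by (intro sum.cong) auto
        ultimately show ?thesis by simp
      qed
      finally show ?thesis .
    qed
    also have "\<dots> = real (e - 1) * (harm (e - 1) / real (e - 1)) + real (card D - e) * (harm e / real e) + 1 / real e"
      using fE fD ED sE by (simp add: e_def card_Diff_subset)
    also have "\<dots> = real (card D) * (harm e / real e)"
    proof -
      obtain k where k: "e = Suc k" using e1' by (cases e) auto
      have "card D \<ge> e" using ED fD by (simp add: e_def card_mono)
      then have cd: "real (card D - e) = real (card D) - real e" by (simp add: of_nat_diff)
      have "real (e - 1) * (harm (e - 1) / real (e - 1)) = harm (e - 1)"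
        by (cases "e - 1 = 0") (auto simp: harm_def)
      moreover have he: "harm e = harm (e - 1) + 1 / real e" using k by (simp add: harm_Suc)
      moreover have "real e > 0" using e1' by simp
      ultimately show ?thesis by (simp add: cd field_simps)
    qed
    finally show ?thesis using cD 3 by (simp add: D_def Phi_def E_def e_def)
  qed
qed


lemma ext_insert:
  assumes "i \<notin> R0" "i < n" "prefs \<in> Cset n (p(i := p i @ [x]))"
  shows "ext R0 (p(i := p i @ [x])) prefs = ext (insert i R0) p prefs"
proof -
  have "take (length ((p(i := p i @ [x])) i)) (prefs i) = (p(i := p i @ [x])) i"
    using assms by (simp only: Cset_iff)
  then have "take (Suc (length (p i))) (prefs i) = p i @ [x]" by simp
  then show ?thesis using assms(1) by (auto simp: ext_def fun_eq_iff)
qed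

lemma multi:
  assumes "finite R" "R \<subseteq> {0..<n}" "valid0 n p" "s < n"
    "\<forall>i\<in>R. length (p i) < n \<and> (s \<in> set (p i) \<longrightarrow> cnt n p s \<ge> 2)"
    "card (empties n p) \<ge> card R"
  shows "(\<Sum>prefs\<in>Cset n p. Phi n s (ext R p prefs)) = real (card (Cset n p)) * Phi n s p"
  using assms
proof (induction R arbitrary: p rule: finite_induct)
  case empty
  have e: "ext {} p prefs = p" for prefs by (simp add: ext_def)
  show ?case by (simp add: e)
next
  case (insert i R0)
  have i: "i < n" "length (p i) < n" using insert by auto
  define u where "u = n - length (p i)"
  have u0: "real u > 0" using i by (simp add: u_def)
  have "(\<Sum>prefs\<in>Cset n p. Phi n s (ext (insert i R0) p prefs))
      = (\<Sum>x\<in>{0..<n} - set (p i). \<Sum>prefs\<in>Cset n (p(i := p i @ [x])). Phi n s (ext (insert i R0) p prefs))"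
    using sum_Cset_split[OF insert(5) i] .
  also have "\<dots> = (\<Sum>x\<in>{0..<n} - set (p i). real (card (Cset n p)) / real u * Phi n s (p(i := p i @ [x])))"
  proof (rule sum.cong[OF refl])
    fix x assume x: "x \<in> {0..<n} - set (p i)"
    let ?p = "p(i := p i @ [x])"
    have "(\<Sum>prefs\<in>Cset n ?p. Phi n s (ext (insert i R0) p prefs)) = (\<Sum>prefs\<in>Cset n ?p. Phi n s (ext R0 ?p prefs))"
      using ext_insert[OF insert(2) i(1)] by (intro sum.cong) auto
    also have "\<dots> = real (card (Cset n ?p)) * Phi n s ?p"
    proof (rule insert.IH)
      show "R0 \<subseteq> {0..<n}" using insert by auto
      show "valid0 n ?p" using insert(5) x by (auto simp: valid0_def)
      show "s < n" by fact
      show "\<forall>j\<in>R0. length (?p j) < n \<and> (s \<in> set (?p j) \<longrightarrow> 2 \<le> cnt n ?p s)"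
      proof
        fix j assume j: "j \<in> R0"
        then have "j \<noteq> i" using insert(2) by auto
        then show "length (?p j) < n \<and> (s \<in> set (?p j) \<longrightarrow> 2 \<le> cnt n ?p s)"
          using insert(7) j cnt_app_ge[OF i(1), of p s x] by auto
      qed
      have "card (empties n ?p) \<ge> card (empties n p) - 1"
        using empties_app[OF i(1), of x p] x by (simp add: card_Diff_singleton_if)
      then show "card R0 \<le> card (empties n ?p)" using insert(1,2,8) by simp
    qed
    also have "\<dots> = real (card (Cset n p)) / real u * Phi n s ?p"
      using card_Cset_app[OF insert(5) i, of x] x u0 by (simp add: u_def)
    finally show "(\<Sum>prefs\<in>Cset n ?p. Phi n s (ext (insert i R0) p prefs)) = real (card (Cset n p)) / real u * Phi n s ?p" .
  qed
  also have "\<dots> = real (card (Cset n p)) / real u * (\<Sum>x\<in>{0..<n} - set (p i). Phi n s (p(i := p i @ [x])))"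
    by (simp add: sum_distrib_left)
  also have "\<dots> = real (card (Cset n p)) / real u * (real u * Phi n s p)"
  proof -
    have "(\<Sum>x\<in>{0..<n} - set (p i). Phi n s (p(i := p i @ [x]))) = real (n - length (p i)) * Phi n s p"
    proof (rule reveal_Phi[OF insert(5) i(1) insert(6)])
      show "cnt n p s \<le> 1 \<longrightarrow> s \<notin> set (p i)" using insert(7) by auto
      show "1 \<le> card (empties n p)" using insert(1,2,8) by simp
    qed
    then show ?thesis by (simp add: u_def)
  qed
  also have "\<dots> = real (card (Cset n p)) * Phi n s p" using u0 by simp
  finally show ?case .
qed


definition rej :: "nat \<Rightarrow> (nat \<Rightarrow> nat list) \<Rightarrow> (nat \<Rightarrow> nat list) \<Rightarrow> nat set" where
  "rej n pris p = {i\<in>{0..<n}. \<exists>j<n. j \<noteq> i \<and> last (p j) = last (p i) \<and> ranks_above (pris (last (p i))) j i}"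

definition validP :: "nat \<Rightarrow> (nat \<Rightarrow> nat list) \<Rightarrow> bool" where
  "validP n p \<longleftrightarrow> valid0 n p \<and> (\<forall>i<n. p i \<noteq> []) \<and> (\<forall>i. n \<le> i \<longrightarrow> p i = []) \<and>
     (\<forall>i<n. \<forall>x\<in>set (p i). \<exists>j<n. last (p j) = x) \<and>
     (\<forall>i<n. \<forall>x\<in>set (butlast (p i)). \<exists>j<n. j \<noteq> i \<and> x \<in> set (p j))"

definition config :: "nat \<Rightarrow> (nat \<Rightarrow> nat list) \<Rightarrow> (nat \<Rightarrow> nat) \<Rightarrow> (nat \<Rightarrow> nat list)" where
  "config n prefs r = (\<lambda>i. if i < n then take (Suc (r i)) (prefs i) else [])"

definition rp :: "(nat \<Rightarrow> nat list) \<Rightarrow> nat \<Rightarrow> nat" where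
  "rp p = (\<lambda>i. length (p i) - 1)"

lemma validP_ne: "validP n p \<Longrightarrow> i < n \<Longrightarrow> p i \<noteq> []"
  unfolding validP_def by blast
lemma validP_dist: "validP n p \<Longrightarrow> i < n \<Longrightarrow> distinct (p i)"
  unfolding validP_def valid0_def by blast
lemma validP_sub: "validP n p \<Longrightarrow> i < n \<Longrightarrow> set (p i) \<subseteq> {0..<n}"
  unfolding validP_def valid0_def by blast
lemma validP_V1: "validP n p \<Longrightarrow> i < n \<Longrightarrow> x \<in> set (p i) \<Longrightarrow> \<exists>j<n. last (p j) = x"
  unfolding validP_def by blast
lemma validP_V2: "validP n p \<Longrightarrow> i < n \<Longrightarrow> x \<in> set (butlast (p i)) \<Longrightarrow> \<exists>j<n. j \<noteq> i \<and> x \<in> set (p j)"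
  unfolding validP_def by blast
lemma validP_out: "validP n p \<Longrightarrow> n \<le> i \<Longrightarrow> p i = []"
  unfolding validP_def by blast

lemma rej_sub: "rej n pris p \<subseteq> {0..<n}"
  unfolding rej_def by blast

lemma last_in_range:
  assumes "validP n p" "j < n"
  shows "last (p j) \<in> set (p j)" "last (p j) < n"
proof -
  show l: "last (p j) \<in> set (p j)" using validP_ne[OF assms] by simp
  show "last (p j) < n" using validP_sub[OF assms] l by auto
qed

lemma top_nonrej:
  assumes pris: "\<forall>x<n. pris x \<in> permutations_of_set {0..<n}" and v: "validP n p"
    and j: "j < n"
  shows "\<exists>j0<n. j0 \<notin> rej n pris p \<and> last (p j0) = last (p j)"
proof -
  define x where "x = last (p j)"
  have xn: "x < n" using last_in_range[OF v j] by (simp add: x_def)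
  define J where "J = {j'. j' < n \<and> last (p j') = x}"
  have "pris x \<in> permutations_of_set {0..<n}" using pris xn by blast
  then have px: "distinct (pris x)" "set (pris x) = {0..<n}" by (simp_all add: permutations_of_setD)
  have "J \<subseteq> set (pris x)" unfolding J_def px(2) by auto
  moreover have "j \<in> J" unfolding J_def x_def using j by simp
  ultimately have "J \<subseteq> set (pris x)" "J \<noteq> {}" by auto
  from ranks_above_top[OF px(1) this] obtain j0 where j0: "j0 \<in> J" "\<forall>j'\<in>J. \<not> ranks_above (pris x) j' j0"
    by blast
  have j0x: "j0 < n" "last (p j0) = x" using j0(1) by (simp_all add: J_def)
  have "j0 \<notin> rej n pris p"
  proof
    assume "j0 \<in> rej n pris p"
    then obtain j' where j': "j' < n" "j' \<noteq> j0" "last (p j') = last (p j0)"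
      "ranks_above (pris (last (p j0))) j' j0" unfolding rej_def by blast
    then have "j' \<in> J" using j0x by (simp add: J_def)
    then show False using j0(2) j' j0x by auto
  qed
  then show ?thesis using j0x unfolding x_def by blast
qed

lemma rej_len:
  assumes v: "validP n p" and i: "i \<in> rej n pris p"
  shows "length (p i) < n"
proof (rule ccontr)
  assume "\<not> length (p i) < n"
  have in_: "i < n" using i rej_sub by fastforce
  have d: "distinct (p i)" "set (p i) \<subseteq> {0..<n}" using validP_dist[OF v in_] validP_sub[OF v in_] by auto
  have "card (set (p i)) \<ge> n" using d \<open>\<not> length (p i) < n\<close> by (simp add: distinct_card)
  then have "card {0..<n} \<le> card (set (p i))" by simp
  from card_seteq[OF finite_atLeastLessThan d(2) this] have all: "set (p i) = {0..<n}" .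
  have "(\<lambda>j. last (p j)) ` {0..<n} = {0..<n}"
  proof
    show "(\<lambda>j. last (p j)) ` {0..<n} \<subseteq> {0..<n}" using last_in_range(2)[OF v] by auto
    show "{0..<n} \<subseteq> (\<lambda>j. last (p j)) ` {0..<n}"
    proof
      fix x assume "x \<in> {0..<n}"
      then have "x \<in> set (p i)" using all by simp
      then obtain j where "j < n" "last (p j) = x" using validP_V1[OF v in_] by blast
      then show "x \<in> (\<lambda>j. last (p j)) ` {0..<n}" by (intro image_eqI[of _ _ j]) auto
    qed
  qed
  then have "card ((\<lambda>j. last (p j)) ` {0..<n}) = card {0..<(n::nat)}" by (rule arg_cong)
  from eq_card_imp_inj_on[OF finite_atLeastLessThan this] have inj: "inj_on (\<lambda>j. last (p j)) {0..<n}" .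
  obtain j where j: "j < n" "j \<noteq> i" "last (p j) = last (p i)" using i unfolding rej_def by blast
  have "j = i" using inj_onD[OF inj j(3)] j(1) in_ by simp
  then show False using j(2) by simp
qed

lemma rej_other:
  assumes v: "validP n p" and i: "i \<in> rej n pris p" and x: "x \<in> set (p i)"
  shows "\<exists>j<n. j \<noteq> i \<and> x \<in> set (p j)"
proof -
  have in_: "i < n" using i rej_sub by fastforce
  have ne: "p i \<noteq> []" using validP_ne[OF v in_] .
  then have "p i = butlast (p i) @ [last (p i)]" by simp
  then have "x \<in> set (butlast (p i) @ [last (p i)])" using x by simp
  then consider "x \<in> set (butlast (p i))" | "x = last (p i)" by auto
  then show ?thesis
  proof cases
    case 1 then show ?thesis using validP_V2[OF v in_] by blast
  next
    case 2
    obtain j where "j < n" "j \<noteq> i" "last (p j) = last (p i)" using i unfolding rej_def by blast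
    moreover have "last (p j) \<in> set (p j)" using last_in_range[OF v \<open>j < n\<close>] by simp
    ultimately show ?thesis using 2 by auto
  qed
qed

lemma rej_cnt:
  assumes v: "validP n p" and i: "i \<in> rej n pris p" and x: "s \<in> set (p i)"
  shows "cnt n p s \<ge> 2"
proof -
  have in_: "i < n" using i rej_sub by fastforce
  obtain j where j: "j < n" "j \<noteq> i" "s \<in> set (p j)" using rej_other[OF v i x] by blast
  have "{i, j} \<subseteq> {j\<in>{0..<n}. s \<in> set (p j)}" using j in_ x by auto
  then have "card {i, j} \<le> cnt n p s" unfolding cnt_def by (intro card_mono) auto
  then show ?thesis using j by simp
qed

lemma empties_ge:
  assumes pris: "\<forall>x<n. pris x \<in> permutations_of_set {0..<n}" and v: "validP n p"
  shows "card (rej n pris p) \<le> card (empties n p)"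
proof -
  define cur where "cur = (\<lambda>j. last (p j)) ` {0..<n}"
  have emp: "empties n p = {0..<n} - cur"
  proof
    show "empties n p \<subseteq> {0..<n} - cur"
    proof
      fix x assume x: "x \<in> empties n p"
      have "x \<notin> cur"
      proof
        assume "x \<in> cur"
        then obtain j where "j < n" "x = last (p j)" by (auto simp: cur_def)
        then show False using x last_in_range(1)[OF v \<open>j < n\<close>] by (auto simp: empties_def)
      qed
      then show "x \<in> {0..<n} - cur" using x by (auto simp: empties_def)
    qed
    show "{0..<n} - cur \<subseteq> empties n p"
    proof
      fix x assume x: "x \<in> {0..<n} - cur"
      have "\<forall>j<n. x \<notin> set (p j)"
      proof (intro allI impI notI)
        fix j assume "j < n" "x \<in> set (p j)"
        then obtain j' where "j' < n" "last (p j') = x" using validP_V1[OF v] by blast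
        then show False using x by (auto simp: cur_def)
      qed
      then show "x \<in> empties n p" using x by (simp add: empties_def)
    qed
  qed
  have curs: "cur \<subseteq> {0..<n}" using last_in_range(2)[OF v] by (auto simp: cur_def)
  have cursub: "cur \<subseteq> (\<lambda>j. last (p j)) ` ({0..<n} - rej n pris p)"
  proof
    fix x assume "x \<in> cur"
    then obtain j where j: "j < n" "x = last (p j)" by (auto simp: cur_def)
    obtain j0 where "j0 < n" "j0 \<notin> rej n pris p" "last (p j0) = last (p j)"
      using top_nonrej[OF pris v j(1)] by blast
    then show "x \<in> (\<lambda>j. last (p j)) ` ({0..<n} - rej n pris p)" using j
      by (intro image_eqI[of _ _ j0]) auto
  qed
  then have "card cur \<le> card ({0..<n} - rej n pris p)"
  proof -
    have "card cur \<le> card ((\<lambda>j. last (p j)) ` ({0..<n} - rej n pris p))"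
      using cursub by (intro card_mono) auto
    also have "\<dots> \<le> card ({0..<n} - rej n pris p)" by (rule card_image_le) auto
    finally show ?thesis .
  qed
  also have "\<dots> = n - card (rej n pris p)"
  proof -
    have "finite (rej n pris p)" using rej_sub[of n pris p] finite_subset by blast
    then show ?thesis using rej_sub[of n pris p] by (simp add: card_Diff_subset)
  qed
  finally have "card cur \<le> n - card (rej n pris p)" .
  moreover have "card (empties n p) = n - card cur"
  proof -
    have "finite cur" using curs finite_subset by blast
    then show ?thesis using emp curs by (simp add: card_Diff_subset)
  qed
  moreover have "card (rej n pris p) \<le> n"
  proof -
    have "rej n pris p \<subseteq> {0..<n}" by (rule rej_sub)
    then have "card (rej n pris p) \<le> card {0..<n}" by (intro card_mono) auto
    then show ?thesis by simp
  qed
  ultimately show ?thesis by linarith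
qed


lemma nth_last_prefix:
  assumes "p \<noteq> []" "take (length p) l = p"
  shows "l ! (length p - 1) = last p"
proof -
  have "last p = p ! (length p - 1)" using assms(1) by (simp add: last_conv_nth)
  also have "\<dots> = (take (length p) l) ! (length p - 1)" using assms(2) by simp
  also have "\<dots> = l ! (length p - 1)" using assms(1) by (simp add: nth_take)
  finally show ?thesis by simp
qed

lemma Cset_facts:
  assumes "prefs \<in> Cset n p" "i < n"
  shows "length (prefs i) = n" "take (length (p i)) (prefs i) = p i" "distinct (prefs i)" "set (prefs i) = {0..<n}"
proof -
  have a: "prefs i \<in> permutations_of_set {0..<n}" "take (length (p i)) (prefs i) = p i"
    using assms by (simp_all add: Cset_iff)
  then show "length (prefs i) = n" "take (length (p i)) (prefs i) = p i" "distinct (prefs i)" "set (prefs i) = {0..<n}"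
    by (simp_all add: length_finite_permutations_of_set permutations_of_setD)
qed

lemma da_step_agree1:
  assumes a: "\<forall>i<n. r i = r' i" and i: "i < n"
  shows "da_step n P r i = da_step n P r' i"
proof -
  have ri: "r i = r' i" using a i by simp
  have e: "(\<exists>j<n. j \<noteq> i \<and> fst P j ! r j = fst P i ! r' i \<and> ranks_above (snd P (fst P i ! r' i)) j i)
    \<longleftrightarrow> (\<exists>j<n. j \<noteq> i \<and> fst P j ! r' j = fst P i ! r' i \<and> ranks_above (snd P (fst P i ! r' i)) j i)"
  proof
    assume "\<exists>j<n. j \<noteq> i \<and> fst P j ! r j = fst P i ! r' i \<and> ranks_above (snd P (fst P i ! r' i)) j i"
    then obtain j where "j < n" "j \<noteq> i" "fst P j ! r j = fst P i ! r' i" "ranks_above (snd P (fst P i ! r' i)) j i" by blast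
    moreover have "r j = r' j" using a \<open>j < n\<close> by simp
    ultimately show "\<exists>j<n. j \<noteq> i \<and> fst P j ! r' j = fst P i ! r' i \<and> ranks_above (snd P (fst P i ! r' i)) j i" by metis
  next
    assume "\<exists>j<n. j \<noteq> i \<and> fst P j ! r' j = fst P i ! r' i \<and> ranks_above (snd P (fst P i ! r' i)) j i"
    then obtain j where "j < n" "j \<noteq> i" "fst P j ! r' j = fst P i ! r' i" "ranks_above (snd P (fst P i ! r' i)) j i" by blast
    moreover have "r j = r' j" using a \<open>j < n\<close> by simp
    ultimately show "\<exists>j<n. j \<noteq> i \<and> fst P j ! r j = fst P i ! r' i \<and> ranks_above (snd P (fst P i ! r' i)) j i" by metis
  qed
  show ?thesis unfolding da_step_def ri e by (rule refl)
qed

lemma da_step_agree: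
  assumes "\<forall>i<n. r i = r' i"
  shows "\<forall>i<n. da_step n P r i = da_step n P r' i"
  using assms da_step_agree1 by blast

lemma funpow_agree:
  assumes "\<forall>i<n. r i = r' i"
  shows "\<forall>i<n. (da_step n P ^^ m) r i = (da_step n P ^^ m) r' i"
  using assms by (induction m) (simp_all add: da_step_agree)

lemma config_agree:
  assumes "\<forall>i<n. r i = r' i"
  shows "config n prefs r = config n prefs r'"
  using assms by (auto simp: config_def fun_eq_iff)

context
  fixes n :: nat and pris :: "nat \<Rightarrow> nat list"
  assumes pris: "\<forall>x<n. pris x \<in> permutations_of_set {0..<n}"
begin

lemma ext_rej_at:
  assumes v: "validP n p" and pr: "prefs \<in> Cset n p" and i: "i \<in> rej n pris p"
  shows "ext (rej n pris p) p prefs i = p i @ [prefs i ! length (p i)]"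
proof -
  have in_: "i < n" using i rej_sub by fastforce
  have l: "length (p i) < n" using rej_len[OF v i] .
  show ?thesis using i Cset_facts[OF pr in_] l by (simp add: ext_def take_Suc_conv_app_nth)
qed

lemma ext_nonrej_at:
  assumes "i \<notin> rej n pris p"
  shows "ext (rej n pris p) p prefs i = p i"
  using assms by (simp add: ext_def)

lemma config_rp:
  assumes v: "validP n p" and pr: "prefs \<in> Cset n p"
  shows "config n prefs (rp p) = p"
proof
  fix i show "config n prefs (rp p) i = p i"
  proof (cases "i < n")
    case True
    have "Suc (length (p i) - 1) = length (p i)" using validP_ne[OF v True] by (cases "p i") auto
    then show ?thesis using True Cset_facts(2)[OF pr True] by (simp add: config_def rp_def)
  next
    case False then show ?thesis using validP_out[OF v] by (simp add: config_def)
  qed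
qed

lemma step_config:
  assumes v: "validP n p" and pr: "prefs \<in> Cset n p"
  shows "config n prefs (da_step n (prefs, pris) (rp p)) = ext (rej n pris p) p prefs"
proof
  fix i show "config n prefs (da_step n (prefs, pris) (rp p)) i = ext (rej n pris p) p prefs i"
  proof (cases "i < n")
    case False
    then have "i \<notin> rej n pris p" using rej_sub by fastforce
    then show ?thesis using False validP_out[OF v] by (simp add: config_def ext_def)
  next
    case True
    have cur: "prefs j ! rp p j = last (p j)" if "j < n" for j
      using nth_last_prefix[OF validP_ne[OF v that] Cset_facts(2)[OF pr that]] by (simp add: rp_def)
    have S: "Suc (rp p i) = length (p i)" using validP_ne[OF v True] by (cases "p i") (auto simp: rp_def)
    have cond: "(\<exists>j<n. j \<noteq> i \<and> prefs j ! rp p j = prefs i ! rp p i \<and> ranks_above (pris (prefs i ! rp p i)) j i)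
       \<longleftrightarrow> i \<in> rej n pris p"
      using cur True unfolding rej_def by auto
    show ?thesis
    proof (cases "i \<in> rej n pris p")
      case r: True
      then have "da_step n (prefs, pris) (rp p) i = Suc (rp p i)"
        using cond by (simp add: da_step_def)
      then show ?thesis using True r S by (simp add: config_def ext_def)
    next
      case r: False
      then have "da_step n (prefs, pris) (rp p) i = rp p i"
        using cond by (simp add: da_step_def)
      then show ?thesis using True r S Cset_facts(2)[OF pr True] by (simp add: config_def ext_def)
    qed
  qed
qed

lemma ext_set_mono:
  assumes v: "validP n p" and pr: "prefs \<in> Cset n p"
  shows "set (p j) \<subseteq> set (ext (rej n pris p) p prefs j)"
proof (cases "j \<in> rej n pris p")
  case True
  then show ?thesis using ext_rej_at[OF v pr True] by auto
qed (simp add: ext_def)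

lemma ext_valid:
  assumes v: "validP n p" and pr: "prefs \<in> Cset n p"
  shows "validP n (ext (rej n pris p) p prefs)"
proof -
  let ?R = "rej n pris p"
  let ?q = "ext ?R p prefs"
  have q_out: "?q i = []" if "n \<le> i" for i
  proof -
    have "i \<notin> ?R" using that rej_sub by fastforce
    then show ?thesis using validP_out[OF v that] by (simp add: ext_def)
  qed
  have q_app: "?q i = p i @ [prefs i ! length (p i)]" if "i \<in> ?R" for i
    using ext_rej_at[OF v pr that] .
  have q_same: "?q i = p i" if "i \<notin> ?R" for i using that by (simp add: ext_def)
  have v0: "valid0 n ?q"
    unfolding valid0_def
  proof (intro allI impI)
    fix i assume i: "i < n"
    show "distinct (?q i) \<and> set (?q i) \<subseteq> {0..<n}"
    proof (cases "i \<in> ?R")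
      case True
      have "?q i = take (Suc (length (p i))) (prefs i)" using True by (simp add: ext_def)
      moreover have "distinct (take (Suc (length (p i))) (prefs i))" using Cset_facts(3)[OF pr i] by simp
      moreover have "set (take (Suc (length (p i))) (prefs i)) \<subseteq> {0..<n}"
        using Cset_facts(4)[OF pr i] by (metis set_take_subset)
      ultimately show ?thesis by simp
    next
      case False
      then show ?thesis using validP_dist[OF v i] validP_sub[OF v i] q_same by simp
    qed
  qed
  have ne: "?q i \<noteq> []" if "i < n" for i
    using validP_ne[OF v that] ext_set_mono[OF v pr, of i] by auto
  have V1: "\<exists>j<n. last (?q j) = x" if i: "i < n" and x: "x \<in> set (?q i)" for i x
  proof -
    have "x \<in> set (p i) \<or> (i \<in> ?R \<and> x = last (?q i))"
    proof (cases "i \<in> ?R")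
      case True then show ?thesis using x q_app[OF True] by auto
    next
      case False then show ?thesis using x q_same[OF False] by auto
    qed
    then show ?thesis
    proof
      assume "x \<in> set (p i)"
      then obtain j where j: "j < n" "last (p j) = x" using validP_V1[OF v i] by blast
      obtain j0 where j0: "j0 < n" "j0 \<notin> ?R" "last (p j0) = last (p j)"
        using top_nonrej[OF pris v j(1)] by blast
      then show ?thesis using j q_same[OF j0(2)] by auto
    next
      assume "i \<in> ?R \<and> x = last (?q i)"
      then show ?thesis using i by blast
    qed
  qed
  have V2: "\<exists>j<n. j \<noteq> i \<and> x \<in> set (?q j)" if i: "i < n" and x: "x \<in> set (butlast (?q i))" for i x
  proof (cases "i \<in> ?R")
    case True
    then have "x \<in> set (p i)" using x q_app[OF True] by simp
    then obtain j where "j < n" "j \<noteq> i" "x \<in> set (p j)" using rej_other[OF v True] by blast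
    then show ?thesis using ext_set_mono[OF v pr, of j] by blast
  next
    case False
    then have "x \<in> set (butlast (p i))" using x q_same[OF False] by simp
    then obtain j where "j < n" "j \<noteq> i" "x \<in> set (p j)" using validP_V2[OF v i] by blast
    then show ?thesis using ext_set_mono[OF v pr, of j] by blast
  qed
  show ?thesis unfolding validP_def using v0 ne q_out V1 V2 by blast
qed

lemma Cset_ext_self:
  assumes v: "validP n p" and pr: "prefs \<in> Cset n p"
  shows "prefs \<in> Cset n (ext (rej n pris p) p prefs)"
proof -
  have "take (length (ext (rej n pris p) p prefs i)) (prefs i) = ext (rej n pris p) p prefs i" if "i < n" for i
  proof (cases "i \<in> rej n pris p")
    case True
    have "length (p i) < n" using rej_len[OF v True] .
    then have "length (ext (rej n pris p) p prefs i) = Suc (length (p i))"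
      using True Cset_facts(1)[OF pr that] by (simp add: ext_def)
    then show ?thesis using True by (simp add: ext_def)
  next
    case False then show ?thesis using Cset_facts(2)[OF pr that] by (simp add: ext_def)
  qed
  then show ?thesis using pr by (simp add: Cset_iff)
qed

lemma Cset_ext_back:
  assumes v: "validP n p" and pr: "prefs \<in> Cset n p"
    and y: "y \<in> Cset n (ext (rej n pris p) p prefs)"
  shows "y \<in> Cset n p" "ext (rej n pris p) p y = ext (rej n pris p) p prefs"
proof -
  let ?q = "ext (rej n pris p) p prefs"
  have yq: "take (length (?q i)) (y i) = ?q i" if "i < n" for i using y that by (simp add: Cset_iff)
  have lenq: "length (?q i) = Suc (length (p i))" if "i \<in> rej n pris p" for i
    using ext_rej_at[OF v pr that] by simp
  have "take (length (p i)) (y i) = p i" if i: "i < n" for i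
  proof (cases "i \<in> rej n pris p")
    case True
    have "take (length (p i)) (y i) = take (length (p i)) (take (length (?q i)) (y i))"
      using lenq[OF True] by simp
    also have "\<dots> = p i" using yq[OF i] ext_rej_at[OF v pr True] by simp
    finally show ?thesis .
  next
    case False then show ?thesis using yq[OF i] by (simp add: ext_def)
  qed
  then show "y \<in> Cset n p" using y by (simp add: Cset_iff)
  show "ext (rej n pris p) p y = ?q"
  proof
    fix i show "ext (rej n pris p) p y i = ?q i"
    proof (cases "i \<in> rej n pris p")
      case True
      have i: "i < n" using True rej_sub by fastforce
      have "ext (rej n pris p) p y i = take (length (?q i)) (y i)"
        using True lenq[OF True] by (simp add: ext_def)
      then show ?thesis using yq[OF i] by simp
    qed (simp add: ext_def)
  qed
qed

end


lemma ext_rp_lemma: "rp (ext R p prefs) i = (if i \<in> R then length (take (Suc (length (p i))) (prefs i)) - 1 else rp p i)"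
  by (simp add: rp_def ext_def)

context
  fixes n :: nat and pris :: "nat \<Rightarrow> nat list"
  assumes pris: "\<forall>x<n. pris x \<in> permutations_of_set {0..<n}"
begin

lemma step_val:
  assumes v: "validP n p" and pr: "prefs \<in> Cset n p" and i: "i < n"
  shows "da_step n (prefs, pris) (rp p) i = (if i \<in> rej n pris p then Suc (rp p i) else rp p i)"
proof -
  have cur: "prefs j ! rp p j = last (p j)" if "j < n" for j
    using nth_last_prefix[OF validP_ne[OF v that] Cset_facts(2)[OF pr that]] by (simp add: rp_def)
  have ci: "prefs i ! rp p i = last (p i)" using cur i by blast
  have e1: "\<forall>j<n. (prefs j ! rp p j = last (p i)) = (last (p j) = last (p i))" using cur by simp
  have cond: "(\<exists>j<n. j \<noteq> i \<and> prefs j ! rp p j = last (p i) \<and> ranks_above (pris (last (p i))) j i)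
     \<longleftrightarrow> (\<exists>j<n. j \<noteq> i \<and> last (p j) = last (p i) \<and> ranks_above (pris (last (p i))) j i)"
    using e1 by blast
  have r: "i \<in> rej n pris p \<longleftrightarrow> (\<exists>j<n. j \<noteq> i \<and> last (p j) = last (p i) \<and> ranks_above (pris (last (p i))) j i)"
    using i unfolding rej_def by simp
  show ?thesis unfolding da_step_def fst_conv snd_conv ci cond r[symmetric] ..
qed

lemma step_rp:
  assumes v: "validP n p" and pr: "prefs \<in> Cset n p" and i: "i < n"
  shows "da_step n (prefs, pris) (rp p) i = rp (ext (rej n pris p) p prefs) i"
proof (cases "i \<in> rej n pris p")
  case True
  have S: "Suc (rp p i) = length (p i)" using validP_ne[OF v i] by (cases "p i") (auto simp: rp_def)
  show ?thesis using step_val[OF v pr i] True ext_rej_at[OF pris v pr True] S by (simp add: rp_def)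
next
  case False
  then show ?thesis using step_val[OF v pr i] by (simp add: rp_def ext_def)
qed

lemma main:
  assumes s: "s < n"
  shows "validP n p \<Longrightarrow> (\<Sum>prefs\<in>Cset n p. Phi n s (config n prefs ((da_step n (prefs, pris) ^^ m) (rp p))))
      = real (card (Cset n p)) * Phi n s p"
proof (induction m arbitrary: p)
  case 0
  then show ?case using config_rp[OF pris] by simp
next
  case (Suc m)
  note v = Suc.prems
  let ?R = "rej n pris p"
  define G where "G prefs = Phi n s (config n prefs ((da_step n (prefs, pris) ^^ Suc m) (rp p)))" for prefs
  have Gq: "G y = Phi n s (config n y ((da_step n (y, pris) ^^ m) (rp (ext ?R p prefs))))"
    if pr: "prefs \<in> Cset n p" and y: "y \<in> Cset n (ext ?R p prefs)" for prefs y
  proof -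
    have yp: "y \<in> Cset n p" "ext ?R p y = ext ?R p prefs" using Cset_ext_back[OF pris v pr y] by auto
    have "(da_step n (y, pris) ^^ Suc m) (rp p) = (da_step n (y, pris) ^^ m) (da_step n (y, pris) (rp p))"
      by (simp only: funpow_Suc_right o_apply)
    moreover have "\<forall>i<n. da_step n (y, pris) (rp p) i = rp (ext ?R p prefs) i"
      using step_rp[OF v yp(1)] yp(2) by simp
    then have "\<forall>i<n. (da_step n (y, pris) ^^ m) (da_step n (y, pris) (rp p)) i = (da_step n (y, pris) ^^ m) (rp (ext ?R p prefs)) i"
      by (rule funpow_agree)
    then have "config n y ((da_step n (y, pris) ^^ m) (da_step n (y, pris) (rp p))) = config n y ((da_step n (y, pris) ^^ m) (rp (ext ?R p prefs)))"
      by (rule config_agree)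
    ultimately have "config n y ((da_step n (y, pris) ^^ Suc m) (rp p)) = config n y ((da_step n (y, pris) ^^ m) (rp (ext ?R p prefs)))"
      by simp
    then show ?thesis by (simp add: G_def)
  qed
  have fR: "finite ?R" using rej_sub[of n pris p] finite_subset by blast
  have "sum G (Cset n p) = (\<Sum>prefs\<in>Cset n p. Phi n s (ext ?R p prefs))"
  proof (rule tower)
    show "finite ?R" by (rule fR)
    show "?R \<subseteq> {0..<n}" by (rule rej_sub)
    show "valid0 n p" using v by (simp add: validP_def)
    show "\<forall>i\<in>?R. length (p i) < n" using rej_len[OF v] by blast
    show "\<forall>prefs\<in>Cset n p. sum G (Cset n (ext ?R p prefs)) = real (card (Cset n (ext ?R p prefs))) * Phi n s (ext ?R p prefs)"
    proof
      fix prefs assume pr: "prefs \<in> Cset n p"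
      have "sum G (Cset n (ext ?R p prefs)) = (\<Sum>y\<in>Cset n (ext ?R p prefs). Phi n s (config n y ((da_step n (y, pris) ^^ m) (rp (ext ?R p prefs)))))"
        using Gq[OF pr] by (rule sum.cong[OF refl])
      also have "\<dots> = real (card (Cset n (ext ?R p prefs))) * Phi n s (ext ?R p prefs)"
        by (rule Suc.IH[OF ext_valid[OF pris v pr]])
      finally show "sum G (Cset n (ext ?R p prefs)) = real (card (Cset n (ext ?R p prefs))) * Phi n s (ext ?R p prefs)" .
    qed
  qed
  also have "\<dots> = real (card (Cset n p)) * Phi n s p"
  proof (rule multi)
    show "finite ?R" by (rule fR)
    show "?R \<subseteq> {0..<n}" by (rule rej_sub)
    show "valid0 n p" using v by (simp add: validP_def)
    show "s < n" by (rule s)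
    show "\<forall>i\<in>?R. length (p i) < n \<and> (s \<in> set (p i) \<longrightarrow> 2 \<le> cnt n p s)"
      using rej_len[OF v] rej_cnt[OF v] by blast
    show "card ?R \<le> card (empties n p)" by (rule empties_ge[OF pris v])
  qed
  finally show ?case by (simp add: G_def)
qed

end


lemma length_le_n:
  assumes v: "validP n q" and i: "i < n"
  shows "length (q i) \<le> n"
proof -
  have "card (set (q i)) \<le> card {0..<n}" using validP_sub[OF v i] by (intro card_mono) auto
  then show ?thesis using validP_dist[OF v i] by (simp add: distinct_card)
qed

context
  fixes n :: nat and pris :: "nat \<Rightarrow> nat list"
  assumes pris: "\<forall>x<n. pris x \<in> permutations_of_set {0..<n}"
begin

lemma q0_valid:
  assumes pr: "prefs \<in> Cset n (\<lambda>_. [])"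
  shows "validP n (config n prefs (\<lambda>_. 0))"
proof -
  let ?q = "config n prefs (\<lambda>_. 0)"
  have qi: "?q i = [prefs i ! 0]" "prefs i ! 0 < n" if i: "i < n" for i
  proof -
    have l: "length (prefs i) = n" "set (prefs i) = {0..<n}" using Cset_facts[OF pr i] by auto
    then have "prefs i \<noteq> []" using i by auto
    then show "?q i = [prefs i ! 0]" using i by (simp add: config_def take_Suc_conv_app_nth)
    have "prefs i ! 0 \<in> set (prefs i)" using l(1) i by (intro nth_mem) simp
    then show "prefs i ! 0 < n" using l by simp
  qed
  have qo: "?q i = []" if "\<not> i < n" for i using that by (simp add: config_def)
  have v0: "valid0 n ?q" unfolding valid0_def using qi by simp
  have V1: "\<forall>i<n. \<forall>x\<in>set (?q i). \<exists>j<n. last (?q j) = x" using qi by auto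
  have V2: "\<forall>i<n. \<forall>x\<in>set (butlast (?q i)). \<exists>j<n. j \<noteq> i \<and> x \<in> set (?q j)" using qi by simp
  show ?thesis unfolding validP_def using v0 V1 V2 qi qo by auto
qed

lemma q0_Cset:
  assumes pr: "prefs \<in> Cset n (\<lambda>_. [])"
  shows "prefs \<in> Cset n (config n prefs (\<lambda>_. 0))"
  using pr by (auto simp: Cset_iff config_def min_def)

lemma rp_q0: "rp (config n prefs (\<lambda>_. 0)) = (\<lambda>_. 0)"
  by (auto simp: rp_def config_def fun_eq_iff)

lemma q0_ext: "config n prefs (\<lambda>_. 0) = ext {0..<n} (\<lambda>_. []) prefs"
  by (auto simp: config_def ext_def fun_eq_iff)

definition rr :: "(nat \<Rightarrow> nat list) \<Rightarrow> nat \<Rightarrow> nat \<Rightarrow> nat" where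
  "rr prefs m = (da_step n (prefs, pris) ^^ m) (\<lambda>_. 0)"

definition qq :: "(nat \<Rightarrow> nat list) \<Rightarrow> nat \<Rightarrow> nat \<Rightarrow> nat list" where
  "qq prefs m = config n prefs (rr prefs m)"

lemma inv:
  assumes pr: "prefs \<in> Cset n (\<lambda>_. [])"
  shows "validP n (qq prefs m) \<and> prefs \<in> Cset n (qq prefs m) \<and> (\<forall>i<n. rr prefs m i = rp (qq prefs m) i)"
proof (induction m)
  case 0
  have "rr prefs 0 = (\<lambda>_. 0)" by (simp add: rr_def)
  then show ?case using q0_valid[OF pr] q0_Cset[OF pr] rp_q0 by (simp add: qq_def)
next
  case (Suc m)
  let ?q = "qq prefs m"
  have v: "validP n ?q" and pq: "prefs \<in> Cset n ?q" and ag: "\<forall>i<n. rr prefs m i = rp ?q i" using Suc by auto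
  have rs: "rr prefs (Suc m) = da_step n (prefs, pris) (rr prefs m)" by (simp add: rr_def)
  have ag2: "\<forall>i<n. rr prefs (Suc m) i = da_step n (prefs, pris) (rp ?q) i"
    unfolding rs by (rule da_step_agree[OF ag])
  have qs: "qq prefs (Suc m) = ext (rej n pris ?q) ?q prefs"
  proof -
    have "qq prefs (Suc m) = config n prefs (rr prefs (Suc m))" by (simp add: qq_def)
    also have "\<dots> = config n prefs (da_step n (prefs, pris) (rp ?q))"
      by (rule config_agree[OF ag2])
    also have "\<dots> = ext (rej n pris ?q) ?q prefs" by (rule step_config[OF pris v pq])
    finally show ?thesis .
  qed
  show ?case
  proof (intro conjI)
    show "validP n (qq prefs (Suc m))" unfolding qs by (rule ext_valid[OF pris v pq])
    show "prefs \<in> Cset n (qq prefs (Suc m))" unfolding qs by (rule Cset_ext_self[OF pris v pq])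
    show "\<forall>i<n. rr prefs (Suc m) i = rp (qq prefs (Suc m)) i"
      using ag2 step_rp[OF pris v pq] unfolding qs by simp
  qed
qed

lemma qq_Suc:
  assumes pr: "prefs \<in> Cset n (\<lambda>_. [])"
  shows "qq prefs (Suc m) = ext (rej n pris (qq prefs m)) (qq prefs m) prefs"
proof -
  let ?q = "qq prefs m"
  have v: "validP n ?q" and pq: "prefs \<in> Cset n ?q" and ag: "\<forall>i<n. rr prefs m i = rp ?q i" using inv[OF pr] by auto
  have rs: "rr prefs (Suc m) = da_step n (prefs, pris) (rr prefs m)" by (simp add: rr_def)
  have ag2: "\<forall>i<n. rr prefs (Suc m) i = da_step n (prefs, pris) (rp ?q) i"
    unfolding rs by (rule da_step_agree[OF ag])
  have "qq prefs (Suc m) = config n prefs (rr prefs (Suc m))" by (simp add: qq_def)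
  also have "\<dots> = config n prefs (da_step n (prefs, pris) (rp ?q))"
    by (rule config_agree[OF ag2])
  also have "\<dots> = ext (rej n pris ?q) ?q prefs" by (rule step_config[OF pris v pq])
  finally show ?thesis .
qed

lemma progress:
  assumes pr: "prefs \<in> Cset n (\<lambda>_. [])"
  shows "rej n pris (qq prefs m) = {} \<or> n + m \<le> (\<Sum>i\<in>{0..<n}. length (qq prefs m i))"
proof (induction m)
  case 0
  have "\<forall>i\<in>{0..<n}. length (qq prefs 0 i) = 1"
  proof
    fix i assume "i \<in> {0..<n}"
    then have "length (prefs i) = n" "i < n" using Cset_facts(1)[OF pr] by auto
    then show "length (qq prefs 0 i) = 1" by (simp add: qq_def rr_def config_def)
  qed
  then have "(\<Sum>i\<in>{0..<n}. length (qq prefs 0 i)) = n" by simp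
  then show ?case by simp
next
  case (Suc m)
  let ?q = "qq prefs m"
  let ?R = "rej n pris ?q"
  have v: "validP n ?q" and pq: "prefs \<in> Cset n ?q" using inv[OF pr] by auto
  show ?case
  proof (cases "?R = {}")
    case True
    then have "qq prefs (Suc m) = ?q" using qq_Suc[OF pr] by (simp add: ext_def)
    then show ?thesis using True by simp
  next
    case False
    then have ge: "n + m \<le> (\<Sum>i\<in>{0..<n}. length (?q i))" using Suc by simp
    obtain i0 where i0: "i0 \<in> ?R" using False by blast
    have "(\<Sum>i\<in>{0..<n}. length (?q i)) < (\<Sum>i\<in>{0..<n}. length (qq prefs (Suc m) i))"
    proof (rule sum_strict_mono_ex1)
      show "finite {0..<n}" by simp
      show "\<forall>i\<in>{0..<n}. length (?q i) \<le> length (qq prefs (Suc m) i)"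
        using ext_set_mono[OF pris v pq] unfolding qq_Suc[OF pr]
        by (metis le_refl ext_def le_SucI length_append_singleton ext_rej_at[OF pris v pq])
      show "\<exists>a\<in>{0..<n}. length (?q a) < length (qq prefs (Suc m) a)"
        using i0 rej_sub[of n pris ?q] ext_rej_at[OF pris v pq i0] unfolding qq_Suc[OF pr] by force
    qed
    then show ?thesis using ge by simp
  qed
qed

lemma terminated:
  assumes pr: "prefs \<in> Cset n (\<lambda>_. [])"
  shows "rej n pris (qq prefs (n * n)) = {}"
proof (rule ccontr)
  assume ne: "rej n pris (qq prefs (n * n)) \<noteq> {}"
  then have "n + n * n \<le> (\<Sum>i\<in>{0..<n}. length (qq prefs (n * n) i))" using progress[OF pr] by blast
  also have "\<dots> \<le> (\<Sum>i\<in>{0..<n}. n)"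
    using length_le_n[OF conjunct1[OF inv[OF pr]]] by (intro sum_mono) auto
  also have "\<dots> = n * n" by simp
  finally have "n = 0" by simp
  then show False using ne rej_sub[of n pris "qq prefs (n * n)"] by auto
qed

end


context
  fixes n :: nat and pris :: "nat \<Rightarrow> nat list"
  assumes pris: "\<forall>x<n. pris x \<in> permutations_of_set {0..<n}"
begin

lemma final_count:
  assumes v: "validP n q" and pq: "prefs \<in> Cset n q" and nr: "rej n pris q = {}"
    and ag: "\<forall>i<n. da_final n (prefs, pris) i = rp q i"
  shows "real (card (not_envied n (prefs, pris))) = (\<Sum>s\<in>{0..<n}. Phi n s q)"
proof -
  let ?P = "(prefs, pris)"
  have inj: "inj_on (\<lambda>j. last (q j)) {0..<n}"
  proof (rule inj_onI)
    fix i j assume i: "i \<in> {0..<n}" and j: "j \<in> {0..<n}" and eq: "last (q i) = last (q j)"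
    show "i = j"
    proof (rule ccontr)
      assume ne: "i \<noteq> j"
      define x where "x = last (q i)"
      have xn: "x < n" using last_in_range(2)[OF v] i by (simp add: x_def)
      have "pris x \<in> permutations_of_set {0..<n}" using pris xn by blast
      then have px: "set (pris x) = {0..<n}" by (simp add: permutations_of_setD)
      have "ranks_above (pris x) i j \<or> ranks_above (pris x) j i"
        by (rule ranks_above_total) (use px i j ne in auto)
      then show False
      proof
        assume r: "ranks_above (pris x) i j"
        have "j < n" "i < n" "i \<noteq> j" "last (q i) = last (q j)" "ranks_above (pris (last (q j))) i j"
          using i j ne eq r unfolding x_def by simp_all
        then have "\<exists>j'<n. j' \<noteq> j \<and> last (q j') = last (q j) \<and> ranks_above (pris (last (q j))) j' j"
          by (intro exI[of _ i]) simp
        then have "j \<in> rej n pris q" using j unfolding rej_def by simp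
        then show False using nr by simp
      next
        assume r: "ranks_above (pris x) j i"
        have "j < n" "i < n" "j \<noteq> i" "last (q j) = last (q i)" "ranks_above (pris (last (q i))) j i"
          using i j ne eq r unfolding x_def by simp_all
        then have "\<exists>j'<n. j' \<noteq> i \<and> last (q j') = last (q i) \<and> ranks_above (pris (last (q i))) j' i"
          by (intro exI[of _ j]) simp
        then have "i \<in> rej n pris q" using i unfolding rej_def by simp
        then show False using nr by simp
      qed
    qed
  qed
  have sub: "(\<lambda>j. last (q j)) ` {0..<n} \<subseteq> {0..<n}" using last_in_range(2)[OF v] by auto
  have "card ((\<lambda>j. last (q j)) ` {0..<n}) = card {0..<n}" by (rule card_image[OF inj])
  then have img: "(\<lambda>j. last (q j)) ` {0..<n} = {0..<n}" by (rule card_subset_eq[OF finite_atLeastLessThan sub])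
  have surj: "\<exists>j<n. last (q j) = x" if "x < n" for x
  proof -
    have "x \<in> (\<lambda>j. last (q j)) ` {0..<n}" using that img by simp
    then show ?thesis by auto
  qed
  have emp: "empties n q = {}"
  proof -
    have "x \<notin> empties n q" for x
    proof
      assume x: "x \<in> empties n q"
      then have "x < n" by (simp add: empties_def)
      then obtain j where "j < n" "last (q j) = x" using surj by blast
      then show False using x last_in_range(1)[OF v \<open>j < n\<close>] by (auto simp: empties_def)
    qed
    then show ?thesis by blast
  qed
  have Phi_val: "Phi n s q = (if cnt n q s = 1 then 1 else 0)" if s: "s < n" for s
  proof -
    have "cnt n q s \<noteq> 0" using cnt_zero_iff[OF s, of q] emp by simp
    then show ?thesis by (simp add: Phi_def emp)
  qed
  have DA: "DA n ?P i = prefs i ! rp q i" if "i < n" for i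
    using ag that by (simp add: DA_def)
  have DAl: "prefs i ! rp q i = last (q i)" if i: "i < n" for i
    using nth_last_prefix[OF validP_ne[OF v i] Cset_facts(2)[OF pq i]] by (simp add: rp_def)
  have envies: "envies n ?P i j \<longleftrightarrow> last (q j) \<in> set (butlast (q i))" if i: "i < n" and j: "j < n" for i j
  proof -
    have lq: "length (q i) \<le> n" by (rule length_le_n[OF v i])
    have lqp: "length (q i) > 0" using validP_ne[OF v i] by simp
    have rl: "rp q i < length (prefs i)" using lq lqp Cset_facts(1)[OF pq i] unfolding rp_def by linarith
    have "envies n ?P i j \<longleftrightarrow> ranks_above (prefs i) (last (q j)) (prefs i ! rp q i)"
      unfolding envies_def using DA[OF i] DA[OF j] DAl[OF j] by simp
    also have "\<dots> \<longleftrightarrow> last (q j) \<in> set (take (rp q i) (prefs i))"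
      by (rule ranks_above_distinct_nth[OF Cset_facts(3)[OF pq i] rl])
    also have "take (rp q i) (prefs i) = butlast (q i)"
    proof -
      have "butlast (q i) = butlast (take (length (q i)) (prefs i))" using Cset_facts(2)[OF pq i] by simp
      also have "\<dots> = take (length (q i) - 1) (prefs i)"
        using lq Cset_facts(1)[OF pq i] by (simp add: butlast_take)
      finally show ?thesis by (simp add: rp_def)
    qed
    finally show ?thesis .
  qed
  define S where "S j = {i\<in>{0..<n}. last (q j) \<in> set (butlast (q i))}" for j
  have cntS: "cnt n q (last (q j)) = Suc (card (S j))" if j: "j < n" for j
  proof -
    have decomp: "set (q i) = insert (last (q i)) (set (butlast (q i)))" if "i < n" for i
    proof -
      have "q i = butlast (q i) @ [last (q i)]" using validP_ne[OF v that] by simp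
      then have "set (q i) = set (butlast (q i) @ [last (q i)])" by (rule arg_cong)
      then show ?thesis by simp
    qed
    have seteq: "{i\<in>{0..<n}. last (q j) \<in> set (q i)} = insert j (S j)"
    proof
      show "{i\<in>{0..<n}. last (q j) \<in> set (q i)} \<subseteq> insert j (S j)"
      proof
        fix i assume "i \<in> {i\<in>{0..<n}. last (q j) \<in> set (q i)}"
        then have i: "i < n" "last (q j) \<in> set (q i)" by auto
        show "i \<in> insert j (S j)"
        proof (cases "i = j")
          case False
          have "last (q j) \<noteq> last (q i)"
          proof
            assume "last (q j) = last (q i)"
            then have "j = i" using inj_onD[OF inj] i(1) j by simp
            then show False using False by simp
          qed
          then have "last (q j) \<in> set (butlast (q i))" using i decomp[OF i(1)] by auto
          then show ?thesis using i by (simp add: S_def)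
        qed simp
      qed
      show "insert j (S j) \<subseteq> {i\<in>{0..<n}. last (q j) \<in> set (q i)}"
        using j decomp last_in_range(1)[OF v j] by (auto simp: S_def)
    qed
    have jS: "j \<notin> S j"
    proof
      assume "j \<in> S j"
      then have "last (q j) \<in> set (butlast (q j))" by (simp add: S_def)
      moreover have "distinct (butlast (q j) @ [last (q j)])"
        using validP_dist[OF v j] validP_ne[OF v j] by simp
      ultimately show False by simp
    qed
    have "finite (S j)" by (simp add: S_def)
    then show ?thesis unfolding cnt_def seteq using jS by simp
  qed
  have NE: "j \<in> not_envied n ?P \<longleftrightarrow> j < n \<and> cnt n q (last (q j)) = 1" for j
  proof (cases "j < n")
    case True
    have "(\<exists>i\<in>{0..<n}. envies n ?P i j) \<longleftrightarrow> (\<exists>i\<in>{0..<n}. last (q j) \<in> set (butlast (q i)))"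
      using envies[OF _ True] by simp
    also have "\<dots> \<longleftrightarrow> S j \<noteq> {}" unfolding S_def by blast
    finally have "(\<exists>i\<in>{0..<n}. envies n ?P i j) \<longleftrightarrow> S j \<noteq> {}" .
    moreover have "S j = {} \<longleftrightarrow> card (S j) = 0" by (simp add: S_def)
    moreover have "j \<in> not_envied n ?P \<longleftrightarrow> \<not> (\<exists>i\<in>{0..<n}. envies n ?P i j)"
      using True unfolding not_envied_def by simp
    ultimately show ?thesis using True cntS[OF True] by simp
  qed (simp add: not_envied_def)
  have NEsub: "not_envied n ?P \<subseteq> {0..<n}"
  proof
    fix j assume "j \<in> not_envied n ?P"
    then show "j \<in> {0..<n}" using NE[of j] by simp
  qed
  have imgNE: "(\<lambda>j. last (q j)) ` not_envied n ?P = {s\<in>{0..<n}. cnt n q s = 1}"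
  proof
    show "(\<lambda>j. last (q j)) ` not_envied n ?P \<subseteq> {s\<in>{0..<n}. cnt n q s = 1}"
    proof
      fix s assume "s \<in> (\<lambda>j. last (q j)) ` not_envied n ?P"
      then obtain j where j: "j \<in> not_envied n ?P" "s = last (q j)" by blast
      then have "j < n" "cnt n q (last (q j)) = 1" using NE[of j] by simp_all
      then show "s \<in> {s\<in>{0..<n}. cnt n q s = 1}" using j(2) last_in_range(2)[OF v \<open>j < n\<close>] by simp
    qed
    show "{s\<in>{0..<n}. cnt n q s = 1} \<subseteq> (\<lambda>j. last (q j)) ` not_envied n ?P"
    proof
      fix s assume "s \<in> {s\<in>{0..<n}. cnt n q s = 1}"
      then have s: "s < n" "cnt n q s = 1" by auto
      obtain j where j: "j < n" "last (q j) = s" using surj[OF s(1)] by blast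
      then have "j \<in> not_envied n ?P" using NE[of j] s by simp
      then show "s \<in> (\<lambda>j. last (q j)) ` not_envied n ?P" using j by (intro image_eqI[of _ _ j]) auto
    qed
  qed
  have "card (not_envied n ?P) = card {s\<in>{0..<n}. cnt n q s = 1}"
    using card_image[OF inj_on_subset[OF inj NEsub]] imgNE by simp
  moreover have "(\<Sum>s\<in>{0..<n}. Phi n s q) = real (card {s\<in>{0..<n}. cnt n q s = 1})"
  proof -
    have "(\<Sum>s\<in>{0..<n}. Phi n s q) = (\<Sum>s\<in>{0..<n}. if cnt n q s = 1 then 1 else 0)"
      using Phi_val by (intro sum.cong) auto
    also have "\<dots> = (\<Sum>s\<in>{s\<in>{0..<n}. cnt n q s = 1}. 1)"
      by (rule sum.inter_filter[symmetric]) simp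
    also have "\<dots> = real (card {s\<in>{0..<n}. cnt n q s = 1})" by simp
    finally show ?thesis .
  qed
  ultimately show ?thesis by simp
qed

end


lemma per_pris:
  assumes pr: "pris \<in> (\<Pi>\<^sub>E i\<in>{0..<n}. permutations_of_set {0..<n})"
  shows "(\<Sum>prefs\<in>(\<Pi>\<^sub>E i\<in>{0..<n}. permutations_of_set {0..<n}). real (card (not_envied n (prefs, pris))))
         = real (fact n ^ n) * harm n"
proof -
  have prisv: "\<forall>x<n. pris x \<in> permutations_of_set {0..<n}" using pr by auto
  let ?A = "\<Pi>\<^sub>E i\<in>{0..<n}. permutations_of_set {0..<n}"
  let ?p0 = "\<lambda>_::nat. [] :: nat list"
  have AC: "?A = Cset n ?p0" by (simp add: Cset_def)
  define F where "F prefs = config n prefs ((da_step n (prefs, pris) ^^ (n * n)) (\<lambda>_. 0))" for prefs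
  have cardNE: "real (card (not_envied n (prefs, pris))) = (\<Sum>s\<in>{0..<n}. Phi n s (F prefs))"
    if p: "prefs \<in> Cset n ?p0" for prefs
  proof -
    have iv: "validP n (qq n pris prefs (n * n)) \<and> prefs \<in> Cset n (qq n pris prefs (n * n)) \<and>
        (\<forall>i<n. rr n pris prefs (n * n) i = rp (qq n pris prefs (n * n)) i)"
      by (rule inv[OF prisv p])
    have ag: "\<forall>i<n. da_final n (prefs, pris) i = rp (qq n pris prefs (n * n)) i"
    proof -
      have "rr n pris prefs (n * n) = da_final n (prefs, pris)" by (simp add: rr_def[OF prisv] da_final_def)
      then show ?thesis using iv by metis
    qed
    have "real (card (not_envied n (prefs, pris))) = (\<Sum>s\<in>{0..<n}. Phi n s (qq n pris prefs (n * n)))"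
      using final_count[OF prisv _ _ terminated[OF prisv p] ag] iv by blast
    moreover have "qq n pris prefs (n * n) = F prefs" by (simp add: qq_def[OF prisv] rr_def[OF prisv] F_def)
    ultimately show ?thesis by simp
  qed
  have per_s: "(\<Sum>prefs\<in>Cset n ?p0. Phi n s (F prefs)) = real (fact n ^ n) * (harm n / real n)"
    if s: "s < n" for s
  proof -
    have "(\<Sum>prefs\<in>Cset n ?p0. Phi n s (F prefs)) = (\<Sum>prefs\<in>Cset n ?p0. Phi n s (ext {0..<n} ?p0 prefs))"
    proof (rule tower)
      show "finite {0..<n}" by simp
      show "{0..<n} \<subseteq> {0..<n}" by simp
      show "valid0 n ?p0" by (simp add: valid0_def)
      show "\<forall>i\<in>{0..<n}. length (?p0 i) < n" by auto
      show "\<forall>prefs\<in>Cset n ?p0. sum (\<lambda>prefs. Phi n s (F prefs)) (Cset n (ext {0..<n} ?p0 prefs)) =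
          real (card (Cset n (ext {0..<n} ?p0 prefs))) * Phi n s (ext {0..<n} ?p0 prefs)"
      proof
        fix prefs assume p: "prefs \<in> Cset n ?p0"
        have e: "ext {0..<n} ?p0 prefs = config n prefs (\<lambda>_. 0)" by (rule q0_ext[OF prisv, symmetric])
        have "(\<Sum>y\<in>Cset n (config n prefs (\<lambda>_. 0)). Phi n s (config n y ((da_step n (y, pris) ^^ (n * n)) (rp (config n prefs (\<lambda>_. 0))))))
            = real (card (Cset n (config n prefs (\<lambda>_. 0)))) * Phi n s (config n prefs (\<lambda>_. 0))"
          by (rule main[OF prisv s q0_valid[OF prisv p]])
        then show "sum (\<lambda>prefs. Phi n s (F prefs)) (Cset n (ext {0..<n} ?p0 prefs)) =
          real (card (Cset n (ext {0..<n} ?p0 prefs))) * Phi n s (ext {0..<n} ?p0 prefs)"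
          unfolding e rp_q0[OF prisv] F_def .
      qed
    qed
    also have "\<dots> = real (card (Cset n ?p0)) * Phi n s ?p0"
    proof (rule multi)
      show "finite {0..<n}" by simp
      show "{0..<n} \<subseteq> {0..<n}" by simp
      show "valid0 n ?p0" by (simp add: valid0_def)
      show "s < n" by (rule s)
      show "\<forall>i\<in>{0..<n}. length (?p0 i) < n \<and> (s \<in> set (?p0 i) \<longrightarrow> 2 \<le> cnt n ?p0 s)" by auto
      show "card {0..<n} \<le> card (empties n ?p0)" by (simp add: empties_def)
    qed
    also have "Phi n s ?p0 = harm n / real n"
    proof -
      have "cnt n ?p0 s = 0" by (simp add: cnt_def)
      moreover have "empties n ?p0 = {0..<n}" by (auto simp: empties_def)
      ultimately show ?thesis by (simp add: Phi_def)
    qed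
    also have "card (Cset n ?p0) = fact n ^ n"
      by (simp add: card_Cset valid0_def)
    finally show ?thesis by simp
  qed
  have "(\<Sum>prefs\<in>?A. real (card (not_envied n (prefs, pris)))) = (\<Sum>prefs\<in>Cset n ?p0. \<Sum>s\<in>{0..<n}. Phi n s (F prefs))"
    unfolding AC using cardNE by (rule sum.cong[OF refl])
  also have "\<dots> = (\<Sum>s\<in>{0..<n}. \<Sum>prefs\<in>Cset n ?p0. Phi n s (F prefs))" by (rule sum.swap)
  also have "\<dots> = (\<Sum>s\<in>{0..<n}. real (fact n ^ n) * (harm n / real n))"
    using per_s by (intro sum.cong) auto
  also have "\<dots> = real (fact n ^ n) * harm n"
    by (cases "n = 0") (simp_all add: harm_def)
  finally show ?thesis .
qed

theorem proposition3:
  fixes n :: nat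
  shows "measure_pmf.expectation (pmf_of_set (profiles n)) (\<lambda>P. real (card (not_envied n P)))
         = (\<Sum>k=1..n. 1 / real k)"
proof -
  let ?A = "\<Pi>\<^sub>E i\<in>{0..<n}. permutations_of_set {0..<n}"
  have prof: "profiles n = ?A \<times> ?A" by (simp add: profiles_def)
  have finA: "finite ?A" by (intro finite_PiE) auto
  have neA: "?A \<noteq> {}" by (simp add: PiE_eq_empty_iff)
  have cardA: "card ?A = fact n ^ n" by (simp add: card_PiE)
  have fin: "finite (profiles n)" using finA prof by simp
  have ne: "profiles n \<noteq> {}" using neA prof by simp
  have "measure_pmf.expectation (pmf_of_set (profiles n)) (\<lambda>P. real (card (not_envied n P)))
      = (\<Sum>P\<in>profiles n. real (card (not_envied n P))) / real (card (profiles n))"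
    by (rule integral_pmf_of_set[OF ne fin])
  also have "(\<Sum>P\<in>profiles n. real (card (not_envied n P))) = (\<Sum>prefs\<in>?A. \<Sum>pris\<in>?A. real (card (not_envied n (prefs, pris))))"
    unfolding prof by (simp add: sum.cartesian_product)
  also have "\<dots> = (\<Sum>pris\<in>?A. \<Sum>prefs\<in>?A. real (card (not_envied n (prefs, pris))))" by (rule sum.swap)
  also have "\<dots> = (\<Sum>pris\<in>?A. real (fact n ^ n) * harm n)"
    using per_pris by (intro sum.cong) auto
  also have "\<dots> = real (fact n ^ n) * real (fact n ^ n) * harm n" using cardA by simp
  also have "real (card (profiles n)) = real (fact n ^ n) * real (fact n ^ n)"
    unfolding prof card_cartesian_product cardA by simp
  finally show ?thesis by (simp add: harm_def)
qed

end
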